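(* Let $\alpha_{\mathrm{fail}},\alpha_{\mathrm{succ}},\alpha_{\mathrm{ch}}>0$ be arbitrary and $\mathrm{3RR}=\textsc{RoundRobin}(\mathrm{ALG}_{\mathrm{fail}},\mathrm{ALG}_{\mathrm{succ}},\mathrm{ALG}_{\mathrm{ch}};\alpha_{\mathrm{fail}},\alpha_{\mathrm{succ}},\alpha_{\mathrm{ch}})$, run on an SSC instance $I$. Then for every realization $x$ and every $h\in\{\mathrm{fail},\mathrm{succ},\mathrm{ch}\}$, $$\frac1{\alpha_h}\sum_{\tau=1}^{\tau_1}\mathrm{cost}^{\mathrm{3RR}}_\tau(\mathrm{ALG}_h,I)\le\frac1{\alpha_{\mathrm{ch}}}\,\mathrm{cost}(\mathrm{OPT},I).$$
   Context: An instance $I$ of Stochastic Score Classification (SSC) consists of tests $N=\{1,\dots,n\}$, costs $c_j\ge 0$, success probabilities $p_j\in(0,1)$, and integers $0=t_1<t_2<\dots<t_B<t_{B+1}=n+1$. The outcome vector $x\in\{0,1\}^N$ has independent coordinates with $\Pr[x_j=1]=p_j$ (test $j$ succeeds iff $x_j=1$, otherwise it fails). The score $f(x)$ is the unique $i\in\{1,\dots,B\}$ with $t_i\le\|x\|_1\le t_{i+1}-1$. A (possibly adaptive) strategy conducts tests one at a time, each at most once, the choice of the next test possibly depending on outcomes observed so far, and stops as soon as $f(x)$ is determined (i.e., all $x'\in\{0,1\}^N$ agreeing with $x$ on the conducted tests have $f(x')=f(x)$). $\mathrm{cost}(S,I)$ is the random total cost of the tests conducted by strategy $S$ on $I$. $\mathrm{OPT}$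 is a fixed strategy minimizing $\mathbb{E}[\mathrm{cost}(S,I)]$ over all adaptive strategies $S$. Let $\sigma_{\mathrm{fail}},\sigma_{\mathrm{succ}},\sigma_{\mathrm{ch}}$ be permutations of $N$ (ties broken arbitrarily) such that $c_{\sigma_{\mathrm{fail}}(1)}/(1-p_{\sigma_{\mathrm{fail}}(1)})\le\dots\le c_{\sigma_{\mathrm{fail}}(n)}/(1-p_{\sigma_{\mathrm{fail}}(n)})$, $c_{\sigma_{\mathrm{succ}}(1)}/p_{\sigma_{\mathrm{succ}}(1)}\le\dots\le c_{\sigma_{\mathrm{succ}}(n)}/p_{\sigma_{\mathrm{succ}}(n)}$, and $c_{\sigma_{\mathrm{ch}}(1)}\le\dots\le c_{\sigma_{\mathrm{ch}}(n)}$. $\mathrm{ALG}_{\mathrm{fail}},\mathrm{ALG}_{\mathrm{succ}},\mathrm{ALG}_{\mathrm{ch}}$ denote the orders of tests given by $\sigma_{\mathrm{fail}},\sigma_{\mathrm{succ}},\sigma_{\mathrm{ch}}$ respectively. $\textsc{RoundRobin}(\mathrm{ALG}_1,\dots,\mathrm{ALG}_k;\alpha_1,\dots,\alpha_k)$, for fixed orders $\mathrm{ALG}_h$ of $N$ and weights $\alpha_h>0$: initialize $C_h=0$ for all $h$; while $f(x)$ is not determined, for each $h$ let $\delta_h$ be the cost of the first test in the order $\mathrm{ALG}_h$ that has not yet been conducted by the scheme, choose $h^\star\in\arg\min_h (C_h+\delta_h)/\alpha_h$ (ties arbitrary), conduct that test of $\mathrm{ALG}_{h^\star}$, and set $C_{h^\star}\leftarrow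 C_{h^\star}+\delta_{h^\star}$. Each loop iteration is a step; for a round-robin algorithm $\mathrm{RR}$ and step $\tau$ (before termination), $\mathrm{cost}^{\mathrm{RR}}_\tau(\mathrm{ALG}_h,I)$ equals the cost of the test conducted in step $\tau$ if $h=h^\star$ in that step, and $0$ otherwise. For a realization $x$ with $i=f(x)$, $\tau_1$ is the smallest integer $\tau\ge 0$ such that among the tests conducted by $\mathrm{3RR}$ in steps $1,\dots,\tau$ at least $t_i$ succeeded or at least $n+1-t_{i+1}$ failed. *)

theory Defs
  imports Complex_Main
begin

(* Tests are indexed by {0..<n} (the paper's N = {1..n}, shifted by one).
   A realization is x :: nat => bool (test j succeeds iff x j); only its values on
   {0..<n} matter. Thresholds t 1, ..., t (B+1) are given by t :: nat => nat. *)

definition num_succ :: "nat \<Rightarrow> (nat \<Rightarrow> bool) \<Rightarrow> nat" where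
  "num_succ n x = card {j\<in>{0..<n}. x j}"

definition score :: "nat \<Rightarrow> (nat \<Rightarrow> nat) \<Rightarrow> nat \<Rightarrow> (nat \<Rightarrow> bool) \<Rightarrow> nat" where
  "score n t B x = (THE i. 1 \<le> i \<and> i \<le> B \<and> t i \<le> num_succ n x \<and> num_succ n x \<le> t (Suc i) - 1)"

definition determined :: "nat \<Rightarrow> (nat \<Rightarrow> nat) \<Rightarrow> nat \<Rightarrow> nat set \<Rightarrow> (nat \<Rightarrow> bool) \<Rightarrow> bool" where
  "determined n t B D x = (\<forall>x'. (\<forall>j\<in>D. x' j = x j) \<longrightarrow> score n t B x' = score n t B x)"

datatype strategy = Stop | Test nat strategy strategy

fun run :: "strategy \<Rightarrow> (nat \<Rightarrow> bool) \<Rightarrow> nat list" where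
  "run Stop x = []"
| "run (Test j s0 s1) x = j # run (if x j then s1 else s0) x"

definition valid_strategy :: "nat \<Rightarrow> (nat \<Rightarrow> nat) \<Rightarrow> nat \<Rightarrow> strategy \<Rightarrow> bool" where
  "valid_strategy n t B S =
    (\<forall>x. distinct (run S x) \<and> set (run S x) \<subseteq> {0..<n}
         \<and> determined n t B (set (run S x)) x
         \<and> (\<forall>k<length (run S x). \<not> determined n t B (set (take k (run S x))) x))"

definition strat_cost :: "(nat \<Rightarrow> real) \<Rightarrow> strategy \<Rightarrow> (nat \<Rightarrow> bool) \<Rightarrow> real" where
  "strat_cost c S x = sum_list (map c (run S x))"

definition real_prob :: "nat \<Rightarrow> (nat \<Rightarrow> real) \<Rightarrow> nat set \<Rightarrow> real" where
  "real_prob n p A = (\<Prod>j\<in>A. p j) * (\<Prod>j\<in>{0..<n} - A. 1 - p j)"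

definition exp_cost :: "nat \<Rightarrow> (nat \<Rightarrow> real) \<Rightarrow> (nat \<Rightarrow> real) \<Rightarrow> strategy \<Rightarrow> real" where
  "exp_cost n c p S = (\<Sum>A\<in>Pow {0..<n}. real_prob n p A * strat_cost c S (\<lambda>j. j \<in> A))"

definition is_OPT :: "nat \<Rightarrow> (nat \<Rightarrow> real) \<Rightarrow> (nat \<Rightarrow> real) \<Rightarrow> (nat \<Rightarrow> nat) \<Rightarrow> nat \<Rightarrow> strategy \<Rightarrow> bool" where
  "is_OPT n c p t B S = (valid_strategy n t B S \<and>
     (\<forall>S'. valid_strategy n t B S' \<longrightarrow> exp_cost n c p S \<le> exp_cost n c p S'))"

definition is_test_order :: "nat \<Rightarrow> (nat \<Rightarrow> real) \<Rightarrow> nat list \<Rightarrow> bool" where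
  "is_test_order n key L = (distinct L \<and> set L = {0..<n} \<and> sorted (map key L))"

(* Round robin. ords = list of orders ALG_h, alphas = list of weights alpha_h.
   A run is described by the list hs of chosen indices h* in steps 1,2,...;
   the state (D, C) consists of the list of tests conducted so far and the counters C_h. *)
definition next_test :: "nat list \<Rightarrow> nat list \<Rightarrow> nat" where
  "next_test L D = hd (filter (\<lambda>j. j \<notin> set D) L)"

definition delta :: "nat list list \<Rightarrow> (nat \<Rightarrow> real) \<Rightarrow> nat list \<Rightarrow> nat \<Rightarrow> real" where
  "delta ords c D h = c (next_test (ords ! h) D)"

definition rr_step :: "nat list list \<Rightarrow> (nat \<Rightarrow> real) \<Rightarrow> nat list \<times> (nat \<Rightarrow> real) \<Rightarrow> nat \<Rightarrow> nat list \<times> (nat \<Rightarrow> real)" where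
  "rr_step ords c st h =
     (let j = next_test (ords ! h) (fst st)
      in (fst st @ [j], (snd st)(h := snd st h + c j)))"

definition rr_state :: "nat list list \<Rightarrow> (nat \<Rightarrow> real) \<Rightarrow> nat list \<Rightarrow> nat list \<times> (nat \<Rightarrow> real)" where
  "rr_state ords c hs = foldl (rr_step ords c) ([], (\<lambda>_. 0)) hs"

definition valid_rr_run :: "nat \<Rightarrow> (nat \<Rightarrow> nat) \<Rightarrow> nat \<Rightarrow> (nat \<Rightarrow> real) \<Rightarrow> nat list list \<Rightarrow> real list
     \<Rightarrow> (nat \<Rightarrow> bool) \<Rightarrow> nat list \<Rightarrow> bool" where
  "valid_rr_run n t B c ords alphas x hs =
     ((\<forall>\<tau><length hs.
         \<not> determined n t B (set (fst (rr_state ords c (take \<tau> hs)))) x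
       \<and> hs ! \<tau> < length ords
       \<and> (\<forall>h'<length ords.
            (snd (rr_state ords c (take \<tau> hs)) (hs ! \<tau>) + delta ords c (fst (rr_state ords c (take \<tau> hs))) (hs ! \<tau>)) / (alphas ! (hs ! \<tau>))
            \<le> (snd (rr_state ords c (take \<tau> hs)) h' + delta ords c (fst (rr_state ords c (take \<tau> hs))) h') / (alphas ! h')))
      \<and> determined n t B (set (fst (rr_state ords c hs))) x)"

(* cost^RR_tau(ALG_h, I), for step tau >= 1 *)
definition rr_step_cost :: "nat list list \<Rightarrow> (nat \<Rightarrow> real) \<Rightarrow> nat list \<Rightarrow> nat \<Rightarrow> nat \<Rightarrow> real" where
  "rr_step_cost ords c hs h \<tau> =
     (if hs ! (\<tau> - 1) = h then c (fst (rr_state ords c hs) ! (\<tau> - 1)) else 0)"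

definition tau1 :: "nat \<Rightarrow> (nat \<Rightarrow> nat) \<Rightarrow> nat \<Rightarrow> (nat \<Rightarrow> bool) \<Rightarrow> nat list \<Rightarrow> nat" where
  "tau1 n t B x D =
     (LEAST \<tau>. t (score n t B x) \<le> card {j \<in> set (take \<tau> D). x j}
             \<or> n + 1 - t (Suc (score n t B x)) \<le> card {j \<in> set (take \<tau> D). \<not> x j})"

end

theory Submission
  imports Defs
begin


lemma next_test_in:
  assumes "y \<in> set L" "y \<notin> set D"
  shows "next_test L D \<in> set L \<and> next_test L D \<notin> set D"
proof -
  have ne: "filter (\<lambda>j. j \<notin> set D) L \<noteq> []" using assms by (auto simp: filter_empty_conv)
  hence "hd (filter (\<lambda>j. j \<notin> set D) L) \<in> set (filter (\<lambda>j. j \<notin> set D) L)" by (rule hd_in_set)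
  hence "hd (filter (\<lambda>j. j \<notin> set D) L) \<in> set L \<and> hd (filter (\<lambda>j. j \<notin> set D) L) \<notin> set D"
    by simp
  thus ?thesis unfolding next_test_def .
qed

lemma next_test_le:
  assumes "y \<in> set L" "y \<notin> set D" "sorted (map c L)"
  shows "c (next_test L D) \<le> c y"
proof -
  have s: "sorted (map c (filter (\<lambda>j. j \<notin> set D) L))" using assms(3) by (rule sorted_filter)
  have yin: "y \<in> set (filter (\<lambda>j. j \<notin> set D) L)" using assms by simp
  then obtain a r where ar: "filter (\<lambda>j. j \<notin> set D) L = a # r"
    by (cases "filter (\<lambda>j. j \<notin> set D) L") auto
  have "next_test L D = a" by (simp add: next_test_def ar)
  moreover have "c a \<le> c y" using s yin ar by auto
  ultimately show ?thesis by simp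
qed

lemma exchange:
  fixes f :: "nat \<Rightarrow> real"
  assumes "finite U" "finite R" "card U \<le> card R" "\<forall>u\<in>U. f u \<le> v" "\<forall>r\<in>R-U. v \<le> f r" "0 \<le> v"
  shows "sum f U \<le> sum f R"
proof -
  have 1: "sum f U = sum f (U \<inter> R) + sum f (U - R)" using assms(1) by (rule sum.Int_Diff)
  have 2: "sum f R = sum f (R \<inter> U) + sum f (R - U)" using assms(2) by (rule sum.Int_Diff)
  have 3: "sum f (U - R) \<le> of_nat (card (U - R)) * v" using assms(4) by (intro sum_bounded_above) auto
  have 4: "of_nat (card (R - U)) * v \<le> sum f (R - U)" using assms(5) by (intro sum_bounded_below) auto
  have cU: "card U = card (U \<inter> R) + card (U - R)" using assms(1) by (metis card_Int_Diff)
  have cR: "card R = card (R \<inter> U) + card (R - U)" using assms(2) by (metis card_Int_Diff)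
  have "card (U - R) \<le> card (R - U)" using cU cR assms(3) by (simp add: Int_commute)
  hence "of_nat (card (U - R)) * v \<le> of_nat (card (R - U)) * v" using assms(6)
    by (intro mult_right_mono) auto
  thus ?thesis using 1 2 3 4 by (simp add: Int_commute)
qed

lemma t_mono_aux:
  assumes t_incr: "\<forall>i\<in>{1..B}. t i < (t (Suc i)::nat)" and "1 \<le> i"
  shows "i + d \<le> B + 1 \<Longrightarrow> t i + d \<le> t (i + d)"
proof (induction d)
  case 0 then show ?case by simp
next
  case (Suc d)
  hence "t i + d \<le> t (i + d)" by simp
  moreover have "t (i + d) < t (Suc (i + d))" using t_incr Suc.prems assms(2) by auto
  ultimately show ?case by simp
qed

lemma t_strict:
  assumes t_incr: "\<forall>i\<in>{1..B}. t i < (t (Suc i)::nat)" and "1 \<le> i" "i < i'" "i' \<le> B + 1"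
  shows "t i < t i'"
proof -
  have "t i + (i' - i) \<le> t (i + (i' - i))" using t_mono_aux[OF t_incr assms(2), of "i' - i"] assms by simp
  thus ?thesis using assms by simp
qed

lemma score_unique:
  fixes t :: "nat \<Rightarrow> nat" and n B m :: nat
  assumes t_first: "t 1 = 0" and t_last: "t (B + 1) = n + 1"
    and t_incr: "\<forall>i\<in>{1..B}. t i < t (Suc i)" and m: "m \<le> n"
  shows "\<exists>!i. 1 \<le> i \<and> i \<le> B \<and> t i \<le> m \<and> m \<le> t (Suc i) - 1"
proof -
  have B1: "B \<ge> 1"
  proof (rule ccontr)
    assume "\<not> B \<ge> 1"
    hence "B = 0" by simp
    hence "t 1 = n + 1" using t_last by simp
    thus False using t_first by simp
  qed
  define M where "M = Max {i\<in>{1..B}. t i \<le> m}"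
  have fin: "finite {i\<in>{1..B}. t i \<le> m}" by simp
  have ne: "1 \<in> {i\<in>{1..B}. t i \<le> m}" using B1 t_first by simp
  have Mmem: "M \<in> {i\<in>{1..B}. t i \<le> m}" unfolding M_def using fin ne by (intro Max_in) auto
  have Mmax: "\<And>i. i \<in> {i\<in>{1..B}. t i \<le> m} \<Longrightarrow> i \<le> M" unfolding M_def using fin by simp
  have "m < t (Suc M)"
  proof (cases "M < B")
    case True
    hence "Suc M \<notin> {i\<in>{1..B}. t i \<le> m}" using Mmax by fastforce
    thus ?thesis using True by auto
  next
    case False
    hence "M = B" using Mmem by auto
    thus ?thesis using t_last m by simp
  qed
  hence ex: "1 \<le> M \<and> M \<le> B \<and> t M \<le> m \<and> m \<le> t (Suc M) - 1" using Mmem by auto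
  show ?thesis
  proof (rule ex1I[of _ M])
    show "1 \<le> M \<and> M \<le> B \<and> t M \<le> m \<and> m \<le> t (Suc M) - 1" by (rule ex)
  next
    fix i assume i: "1 \<le> i \<and> i \<le> B \<and> t i \<le> m \<and> m \<le> t (Suc i) - 1"
    show "i = M"
    proof (rule ccontr)
      assume "i \<noteq> M"
      then consider "i < M" | "M < i" by linarith
      thus False
      proof cases
        case 1
        have "t (Suc i) \<le> t M"
          using t_strict[OF t_incr, of "Suc i" M] 1 ex by (cases "Suc i = M") auto
        moreover have "t i < t (Suc i)" using t_incr i by auto
        ultimately show False using i ex by linarith
      next
        case 2
        have "t (Suc M) \<le> t i"
          using t_strict[OF t_incr, of "Suc M" i] 2 ex i by (cases "Suc M = i") auto
        moreover have "t M < t (Suc M)" using t_incr ex by auto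
        ultimately show False using i ex by linarith
      qed
    qed
  qed
qed

lemma num_succ_le: "num_succ n x \<le> n"
proof -
  have "card {j\<in>{0..<n}. x j} \<le> card {0..<n}" by (rule card_mono) auto
  thus ?thesis by (simp add: num_succ_def)
qed

lemma score_props:
  assumes "t 1 = 0" "t (B + 1) = n + 1" "\<forall>i\<in>{1..B}. t i < t (Suc i)"
  shows "1 \<le> score n t B x \<and> score n t B x \<le> B \<and> t (score n t B x) \<le> num_succ n x
         \<and> num_succ n x \<le> t (Suc (score n t B x)) - 1"
  unfolding score_def by (rule theI') (rule score_unique[OF assms num_succ_le])

lemma score_eq:
  assumes "t 1 = 0" "t (B + 1) = n + 1" "\<forall>i\<in>{1..B}. t i < t (Suc i)"
    and "1 \<le> i \<and> i \<le> B \<and> t i \<le> num_succ n x \<and> num_succ n x \<le> t (Suc i) - 1"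
  shows "score n t B x = i"
  unfolding score_def by (rule the1_equality[OF score_unique[OF assms(1-3) num_succ_le] assms(4)])

lemma card_split: "finite S \<Longrightarrow> card S = card {j\<in>S. x j} + card {j\<in>S. \<not> x j}"
proof -
  assume f: "finite S"
  have "S = {j\<in>S. x j} \<union> {j\<in>S. \<not> x j}" by auto
  hence "card S = card ({j\<in>S. x j} \<union> {j\<in>S. \<not> x j})" by simp
  also have "\<dots> = card {j\<in>S. x j} + card {j\<in>S. \<not> x j}" using f by (intro card_Un_disjoint) auto
  finally show ?thesis .
qed

lemma det_counts:
  assumes tf: "t 1 = 0" and tl: "t (B + 1) = n + 1" and ti: "\<forall>i\<in>{1..B}. t i < t (Suc i)"
    and D: "D \<subseteq> {0..<n}" and det: "determined n t B D x"
  shows "t (score n t B x) \<le> card {j\<in>D. x j} \<and> n + 1 - t (Suc (score n t B x)) \<le> card {j\<in>D. \<not> x j}"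
proof -
  define s where "s = score n t B x"
  define x1 where "x1 = (\<lambda>j. if j \<in> D then x j else False)"
  define x2 where "x2 = (\<lambda>j. if j \<in> D then x j else True)"
  have finD: "finite D" using D finite_subset by blast
  have "\<forall>j\<in>D. x1 j = x j" by (simp add: x1_def)
  hence "score n t B x1 = s" using det unfolding determined_def s_def by blast
  hence p1: "t s \<le> num_succ n x1" using score_props[OF tf tl ti, of x1] by simp
  have "{j\<in>{0..<n}. x1 j} = {j\<in>D. x j}" using D by (auto simp: x1_def)
  hence n1: "num_succ n x1 = card {j\<in>D. x j}" by (simp add: num_succ_def)
  have "\<forall>j\<in>D. x2 j = x j" by (simp add: x2_def)
  hence "score n t B x2 = s" using det unfolding determined_def s_def by blast
  hence p2: "num_succ n x2 \<le> t (Suc s) - 1" and p2': "1 \<le> s" "s \<le> B"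
    using score_props[OF tf tl ti, of x2] by simp_all
  have "t 1 \<le> t s" using t_strict[OF ti, of 1 s] p2' by (cases "s = 1") auto
  hence ts1: "t s < t (Suc s)" using ti p2' by auto
  have "{j\<in>{0..<n}. x2 j} = {j\<in>D. x j} \<union> ({0..<n} - D)" using D by (auto simp: x2_def)
  hence "num_succ n x2 = card ({j\<in>D. x j} \<union> ({0..<n} - D))" by (simp add: num_succ_def)
  also have "\<dots> = card {j\<in>D. x j} + card ({0..<n} - D)" using finD by (intro card_Un_disjoint) auto
  also have "card ({0..<n} - D) = n - card D" using D finD by (simp add: card_Diff_subset)
  finally have n2: "num_succ n x2 = card {j\<in>D. x j} + (n - card D)" .
  have cD: "card D = card {j\<in>D. x j} + card {j\<in>D. \<not> x j}" using finD by (rule card_split)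
  have cDn: "card D \<le> n" using D card_mono[of "{0..<n}" D] by simp
  show ?thesis unfolding s_def[symmetric] using p1 n1 p2 n2 cD cDn ts1 by linarith
qed

lemma det_all:
  assumes "{0..<n} \<subseteq> D" shows "determined n t B D x"
  unfolding determined_def
proof (intro allI impI)
  fix x' assume a: "\<forall>j\<in>D. x' j = x j"
  have "{j\<in>{0..<n}. x' j} = {j\<in>{0..<n}. x j}" using a assms by auto
  hence "num_succ n x' = num_succ n x" by (simp add: num_succ_def)
  thus "score n t B x' = score n t B x" by (simp add: score_def)
qed



context
  fixes n :: nat and t :: "nat \<Rightarrow> nat" and B :: nat and c :: "nat \<Rightarrow> real"
    and ords :: "nat list list" and alphas :: "real list" and x :: "nat \<Rightarrow> bool" and hs :: "nat list"
  assumes run: "valid_rr_run n t B c ords alphas x hs"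
    and ords_set: "\<forall>i<length ords. set (ords ! i) = {0..<n}"
begin


lemma rr_Suc: "k < length hs \<Longrightarrow>
   rr_state ords c (take (Suc k) hs) = rr_step ords c (rr_state ords c (take k hs)) (hs ! k)"
  by (simp add: rr_state_def take_Suc_conv_app_nth)

lemma D_Suc: "k < length hs \<Longrightarrow> (fst (rr_state ords c (take (Suc k) hs))) = (fst (rr_state ords c (take k hs))) @ [(next_test (ords ! (hs ! k)) (fst (rr_state ords c (take k hs))))]"
  by (simp add: rr_Suc rr_step_def Let_def)

lemma C_Suc: "k < length hs \<Longrightarrow> snd (rr_state ords c (take (Suc k) hs)) h
   = snd (rr_state ords c (take k hs)) h + (if hs ! k = h then c ((next_test (ords ! (hs ! k)) (fst (rr_state ords c (take k hs))))) else 0)"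
  by (simp add: rr_Suc rr_step_def Let_def)

lemma D_map: "k \<le> length hs \<Longrightarrow> (fst (rr_state ords c (take k hs))) = map (\<lambda>k. next_test (ords ! (hs ! k)) (fst (rr_state ords c (take k hs)))) [0..<k]"
proof (induction k)
  case 0 then show ?case by (simp add: rr_state_def)
next
  case (Suc k) then show ?case by (simp add: D_Suc)
qed

lemma C_sum: "k \<le> length hs \<Longrightarrow> snd (rr_state ords c (take k hs)) h
   = (\<Sum>i<k. if hs ! i = h then c ((next_test (ords ! (hs ! i)) (fst (rr_state ords c (take i hs))))) else 0)"
proof (induction k)
  case 0 then show ?case by (simp add: rr_state_def)
next
  case (Suc k) then show ?case by (simp add: C_Suc)
qed

lemma D_take: "k \<le> m \<Longrightarrow> m \<le> length hs \<Longrightarrow> (fst (rr_state ords c (take k hs))) = take k ((fst (rr_state ords c (take m hs))))"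
  using D_map[of k] D_map[of m] by (simp add: take_map)

lemma D_len: "k \<le> length hs \<Longrightarrow> length ((fst (rr_state ords c (take k hs)))) = k"
  using D_map by simp

lemma D_inv: "k \<le> length hs \<Longrightarrow> distinct ((fst (rr_state ords c (take k hs)))) \<and> set ((fst (rr_state ords c (take k hs)))) \<subseteq> {0..<n}"
proof (induction k)
  case 0 then show ?case by (simp add: rr_state_def)
next
  case (Suc k)
  hence k: "k < length hs" by simp
  have IH: "distinct ((fst (rr_state ords c (take k hs)))) \<and> set ((fst (rr_state ords c (take k hs)))) \<subseteq> {0..<n}" using Suc by simp
  have nd: "\<not> determined n t B (set ((fst (rr_state ords c (take k hs))))) x" and hl: "hs ! k < length ords"
    using run k unfolding valid_rr_run_def by auto
  obtain y where y: "y \<in> {0..<n}" "y \<notin> set ((fst (rr_state ords c (take k hs))))" using nd det_all by blast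
  have "y \<in> set (ords ! (hs ! k))" using ords_set hl y by auto
  hence "(next_test (ords ! (hs ! k)) (fst (rr_state ords c (take k hs)))) \<in> set (ords ! (hs ! k)) \<and> (next_test (ords ! (hs ! k)) (fst (rr_state ords c (take k hs)))) \<notin> set ((fst (rr_state ords c (take k hs))))" using next_test_in y by blast
  hence "(next_test (ords ! (hs ! k)) (fst (rr_state ords c (take k hs)))) \<in> {0..<n}" "(next_test (ords ! (hs ! k)) (fst (rr_state ords c (take k hs)))) \<notin> set ((fst (rr_state ords c (take k hs))))" using ords_set hl by auto
  thus ?case using IH by (simp add: D_Suc[OF k])
qed

lemma step_cost_sum: "k \<le> length hs \<Longrightarrow>
   (\<Sum>\<tau>\<in>{1..k}. rr_step_cost ords c hs h \<tau>) = snd (rr_state ords c (take k hs)) h"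
proof (induction k)
  case 0 then show ?case by (simp add: rr_state_def)
next
  case (Suc k)
  hence k: "k < length hs" by simp
  have "fst (rr_state ords c hs) = (fst (rr_state ords c (take (length hs) hs)))" by simp
  also have "\<dots> = map (\<lambda>k. next_test (ords ! (hs ! k)) (fst (rr_state ords c (take k hs)))) [0..<length hs]" by (rule D_map) simp
  finally have "fst (rr_state ords c hs) ! k = (next_test (ords ! (hs ! k)) (fst (rr_state ords c (take k hs))))" using k by simp
  hence "rr_step_cost ords c hs h (Suc k) = (if hs ! k = h then c ((next_test (ords ! (hs ! k)) (fst (rr_state ords c (take k hs))))) else 0)"
    by (simp add: rr_step_cost_def)
  moreover have "{1..Suc k} = insert (Suc k) {1..k}" by (rule atLeastAtMostSuc_conv) simp
  ultimately show ?case using Suc k by (simp add: C_Suc)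
qed

end



theorem lemma2:
  fixes n B :: nat and t :: "nat \<Rightarrow> nat" and c p :: "nat \<Rightarrow> real"
    and a_fail a_succ a_ch :: real and L_fail L_succ L_ch :: "nat list"
    and OPT :: strategy and x :: "nat \<Rightarrow> bool" and hs :: "nat list" and h :: nat
  assumes c_nonneg: "\<forall>j<n. 0 \<le> c j"
    and p_range: "\<forall>j<n. 0 < p j \<and> p j < 1"
    and t_first: "t 1 = 0"
    and t_last: "t (B + 1) = n + 1"
    and t_incr: "\<forall>i\<in>{1..B}. t i < t (Suc i)"
    and ord_fail: "is_test_order n (\<lambda>j. c j / (1 - p j)) L_fail"
    and ord_succ: "is_test_order n (\<lambda>j. c j / p j) L_succ"
    and ord_ch: "is_test_order n c L_ch"
    and alphas_pos: "a_fail > 0" "a_succ > 0" "a_ch > 0"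
    and opt: "is_OPT n c p t B OPT"
    and run3: "valid_rr_run n t B c [L_fail, L_succ, L_ch] [a_fail, a_succ, a_ch] x hs"
    and h: "h < 3"
  shows "(1 / ([a_fail, a_succ, a_ch] ! h)) *
           (\<Sum>\<tau>\<in>{1..tau1 n t B x (fst (rr_state [L_fail, L_succ, L_ch] c hs))}.
              rr_step_cost [L_fail, L_succ, L_ch] c hs h \<tau>)
         \<le> (1 / a_ch) * strat_cost c OPT x"
proof -
  let ?ords = "[L_fail, L_succ, L_ch]"
  let ?al = "[a_fail, a_succ, a_ch]"
  have oset: "\<forall>i<length ?ords. set (?ords ! i) = {0..<n}"
    using ord_fail ord_succ ord_ch by (auto simp: is_test_order_def less_Suc_eq)
  note Dinv = D_inv[OF run3 oset]
  note Dmap = D_map[OF run3 oset]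
  note Dtake = D_take[OF run3 oset]
  note Dlen = D_len[OF run3 oset]
  note Csum = C_sum[OF run3 oset]
  note CSuc = C_Suc[OF run3 oset]
  note scs = step_cost_sum[OF run3 oset]
  have h3: "h = 0 \<or> h = 1 \<or> h = 2" using h by arith
  have alh: "?al ! h > 0" using h3 alphas_pos by auto
  define Dfin where "Dfin = fst (rr_state ?ords c hs)"
  have Dfin_eq: "Dfin = fst (rr_state ?ords c (take (length hs) hs))" by (simp add: Dfin_def)
  define s where "s = score n t B x"
  define T where "T = tau1 n t B x Dfin"
  define P where "P = (\<lambda>\<tau>. t s \<le> card {j \<in> set (take \<tau> Dfin). x j}
             \<or> n + 1 - t (Suc s) \<le> card {j \<in> set (take \<tau> Dfin). \<not> x j})"
  have T': "T = (LEAST \<tau>. P \<tau>)" by (simp add: T_def tau1_def P_def s_def)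
  have Dfi: "distinct Dfin \<and> set Dfin \<subseteq> {0..<n}" using Dinv[of "length hs"] Dfin_eq by simp
  have Dfl: "length Dfin = length hs" using Dlen[of "length hs"] Dfin_eq by simp
  have Dfdet: "determined n t B (set Dfin) x" using run3 by (simp add: valid_rr_run_def Dfin_def)
  have "P (length hs)"
    using det_counts[OF t_first t_last t_incr _ Dfdet] Dfi Dfl by (simp add: P_def s_def)
  hence TL: "T \<le> length hs" unfolding T' by (rule Least_le)
  have notP: "\<And>\<tau>. \<tau> < T \<Longrightarrow> \<not> P \<tau>" unfolding T' by (rule not_less_Least)
  define R where "R = set (run OPT x)"
  have Rv: "distinct (run OPT x)" "R \<subseteq> {0..<n}" "determined n t B R x"
    using opt by (auto simp: is_OPT_def valid_strategy_def R_def)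
  have finR: "finite R" using Rv(2) finite_subset by blast
  have cR: "t s + (n + 1 - t (Suc s)) \<le> card R"
    using det_counts[OF t_first t_last t_incr Rv(2,3)] card_split[OF finR, of x]
    by (simp add: s_def)
  have cost: "strat_cost c OPT x = sum c R"
    using Rv(1) by (simp add: strat_cost_def R_def sum_list_distinct_conv_sum_set)
  have cnn: "0 \<le> sum c R" using Rv(2) c_nonneg by (intro sum_nonneg) auto
  have small: "\<And>\<tau>. \<tau> < T \<Longrightarrow> \<tau> + 2 \<le> card R"
  proof -
    fix \<tau> assume tT: "\<tau> < T"
    hence tl: "\<tau> \<le> length hs" using TL by simp
    have eq: "take \<tau> Dfin = fst (rr_state ?ords c (take \<tau> hs))"
      using Dtake[of \<tau> "length hs"] tl Dfin_eq by simp
    have "card (set (take \<tau> Dfin)) = \<tau>"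
      using Dinv[OF tl] Dlen[OF tl] eq by (simp add: distinct_card)
    moreover have "card (set (take \<tau> Dfin)) = card {j \<in> set (take \<tau> Dfin). x j} + card {j \<in> set (take \<tau> Dfin). \<not> x j}"
      by (rule card_split) simp
    moreover have "\<not> P \<tau>" using notP tT by simp
    ultimately show "\<tau> + 2 \<le> card R" using cR unfolding P_def by linarith
  qed
  have sortch: "sorted (map c L_ch)" using ord_ch by (simp add: is_test_order_def)
  have setch: "set L_ch = {0..<n}" using ord_ch by (simp add: is_test_order_def)
  have lemA: "\<And>\<tau>. \<tau> < length hs \<Longrightarrow> \<tau> < T \<Longrightarrow>
      snd (rr_state ?ords c (take \<tau> hs)) 2 + c (next_test L_ch (fst (rr_state ?ords c (take \<tau> hs)))) \<le> sum c R"
  proof -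
    fix \<tau> assume tl: "\<tau> < length hs" and tT: "\<tau> < T"
    define D where "D = fst (rr_state ?ords c (take \<tau> hs))"
    define E where "E = (\<lambda>k. next_test (?ords ! (hs ! k)) (fst (rr_state ?ords c (take k hs))))"
    have Di: "distinct D" "set D \<subseteq> {0..<n}" using Dinv[of \<tau>] tl by (simp_all add: D_def)
    have DE: "D = map E [0..<\<tau>]" using Dmap[of \<tau>] tl by (simp add: D_def E_def)
    have nd: "\<not> determined n t B (set D) x" using run3 tl by (simp add: valid_rr_run_def D_def)
    obtain y where y: "y \<in> {0..<n}" "y \<notin> set D" using nd det_all by blast
    define j where "j = next_test L_ch D"
    have j: "j \<in> {0..<n}" "j \<notin> set D" using next_test_in[of y L_ch D] y setch by (auto simp: j_def)
    have jmin: "\<And>z. z \<in> {0..<n} \<Longrightarrow> z \<notin> set D \<Longrightarrow> c j \<le> c z"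
      using next_test_le[OF _ _ sortch] setch by (simp add: j_def)
    define I where "I = {k \<in> {0..<\<tau>}. hs ! k = 2}"
    have C: "snd (rr_state ?ords c (take \<tau> hs)) 2 = sum (c \<circ> E) I"
    proof -
      have "snd (rr_state ?ords c (take \<tau> hs)) 2 = (\<Sum>i\<in>{0..<\<tau>}. if hs ! i = 2 then c (E i) else 0)"
        unfolding E_def using Csum[of \<tau> 2] tl by (simp only: lessThan_atLeast0 less_imp_le)
      also have "\<dots> = sum (c \<circ> E) I" unfolding I_def by (rule trans[OF _ sum.inter_filter[symmetric]]) (auto intro!: sum.cong)
      finally show ?thesis .
    qed
    have inj: "inj_on E {0..<\<tau>}" using Di(1) DE by (simp add: distinct_map)
    define S where "S = E ` I"
    have sumS: "sum c S = sum (c \<circ> E) I"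
      unfolding S_def by (rule sum.reindex) (rule inj_on_subset[OF inj], auto simp: I_def)
    have SD: "S \<subseteq> set D" using DE by (auto simp: S_def I_def)
    have Sle: "\<forall>u\<in>S. c u \<le> c j"
    proof
      fix u assume "u \<in> S"
      then obtain k where k: "k < \<tau>" "hs ! k = 2" "u = E k" by (auto simp: S_def I_def)
      have "fst (rr_state ?ords c (take k hs)) = take k D"
        using Dtake[of k \<tau>] k tl by (simp add: D_def)
      hence jn: "j \<notin> set (fst (rr_state ?ords c (take k hs)))" using j(2) in_set_takeD by fastforce
      have "u = next_test L_ch (fst (rr_state ?ords c (take k hs)))" using k by (simp add: E_def)
      thus "c u \<le> c j" using next_test_le[OF _ jn sortch] j(1) setch by simp
    qed
    define A where "A = {z \<in> {0..<n}. c z < c j}"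
    have AD: "A \<subseteq> set D" using jmin by (force simp: A_def)
    define U where "U = insert j (S \<union> A)"
    have UD: "U \<subseteq> insert j (set D)" using SD AD by (auto simp: U_def)
    have Un: "U \<subseteq> {0..<n}" using UD Di(2) j(1) by auto
    have finU: "finite U" using Un finite_subset by blast
    have "card U \<le> card (insert j (set D))" using UD by (intro card_mono) auto
    also have "\<dots> = Suc (card (set D))" using j(2) by simp
    also have "card (set D) = length D" by (rule distinct_card[OF Di(1)])
    also have "length D = \<tau>" using DE by simp
    finally have cU: "card U \<le> card R" using small[OF tT] by simp
    have "sum c U \<le> sum c R"
    proof (rule exchange[OF finU finR cU])
      show "\<forall>u\<in>U. c u \<le> c j" using Sle by (auto simp: U_def A_def)
      show "\<forall>r\<in>R - U. c j \<le> c r" using Rv(2) by (force simp: U_def A_def)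
      show "0 \<le> c j" using j(1) c_nonneg by simp
    qed
    moreover have "sum c (insert j S) \<le> sum c U"
      using finU Un c_nonneg by (intro sum_mono2) (auto simp: U_def)
    moreover have "sum c (insert j S) = c j + sum c S"
      using SD j(2) finite_subset[OF SD] by (subst sum.insert) auto
    ultimately show "snd (rr_state ?ords c (take \<tau> hs)) 2 + c (next_test L_ch (fst (rr_state ?ords c (take \<tau> hs)))) \<le> sum c R"
      using C sumS by (simp add: j_def D_def)
  qed
  have main: "\<And>\<tau>. \<tau> \<le> T \<Longrightarrow> snd (rr_state ?ords c (take \<tau> hs)) h / (?al ! h) \<le> sum c R / a_ch"
  proof -
    fix \<tau> show "\<tau> \<le> T \<Longrightarrow> snd (rr_state ?ords c (take \<tau> hs)) h / (?al ! h) \<le> sum c R / a_ch"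
    proof (induction \<tau>)
      case 0 then show ?case using cnn alphas_pos by (simp add: rr_state_def)
    next
      case (Suc \<tau>)
      hence tT: "\<tau> < T" and tl: "\<tau> < length hs" using TL by auto
      have IH: "snd (rr_state ?ords c (take \<tau> hs)) h / (?al ! h) \<le> sum c R / a_ch" using Suc by simp
      show ?case
      proof (cases "hs ! \<tau> = h")
        case False
        thus ?thesis using CSuc[OF tl, of h] IH by simp
      next
        case True
        define st where "st = rr_state ?ords c (take \<tau> hs)"
        have rr0: "\<forall>h'<length ?ords. (snd st (hs ! \<tau>) + delta ?ords c (fst st) (hs ! \<tau>)) / (?al ! (hs ! \<tau>))
            \<le> (snd st h' + delta ?ords c (fst st) h') / (?al ! h')"
          using run3 tl unfolding valid_rr_run_def st_def by blast
        have rr: "(snd st (hs ! \<tau>) + delta ?ords c (fst st) (hs ! \<tau>)) / (?al ! (hs ! \<tau>))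
            \<le> (snd st 2 + delta ?ords c (fst st) 2) / (?al ! 2)"
          using rr0[rule_format, of 2] by simp
        have "snd (rr_state ?ords c (take (Suc \<tau>) hs)) h = snd st h + delta ?ords c (fst st) h"
          using CSuc[OF tl, of h] True by (simp add: st_def delta_def)
        also have "(snd st h + delta ?ords c (fst st) h) / (?al ! h) \<le> (snd st 2 + c (next_test L_ch (fst st))) / a_ch"
          using rr True by (simp add: delta_def)
        also have "\<dots> \<le> sum c R / a_ch"
          using lemA[OF tl tT] alphas_pos by (simp add: st_def divide_right_mono)
        finally show ?thesis by simp
      qed
    qed
  qed
  have "(\<Sum>\<tau>\<in>{1..T}. rr_step_cost ?ords c hs h \<tau>) = snd (rr_state ?ords c (take T hs)) h"
    by (rule scs[OF TL])
  thus ?thesis using main[of T] cost by (simp add: T_def Dfin_def)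
qed

end
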